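(* Let $R$ be a ring and $A$ an $R$-module with $\mathrm{sr}_R(A)$ finite. Let $B\subseteq C$ be $R$-submodules of $A$. Then (i) $\mathrm{sr}_R(B)\le\mathrm{sr}_R(C)\le\mathrm{sr}_R(A)$; (ii) $\mathrm{sr}_R(C/B)\le\mathrm{sr}_R(A/B)\le\mathrm{sr}_R(A)$.
   Context: A generating subset of an $R$-submodule is minimal if no proper subset of it generates that submodule. An $R$-module $M$ has special rank $\mathrm{sr}_R(M)=r$ if every finitely generated $R$-submodule of $M$ can be generated by $r$ elements and some finitely generated $R$-submodule of $M$ has a minimal generating subset of exactly $r$ elements. *)

theory Defs
  imports Main "HOL-Library.Extended_Nat"
begin

text \<open>Left modules over a ring with identity (scalars form the type 'r),
  given by an explicit carrier so that submodules and quotients are modules too.\<close>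

record ('r, 'm) lmod =
  mcarrier :: "'m set"
  madd :: "'m \<Rightarrow> 'm \<Rightarrow> 'm"
  mzero :: 'm
  msmult :: "'r \<Rightarrow> 'm \<Rightarrow> 'm"

definition left_module :: "('r::ring_1, 'm) lmod \<Rightarrow> bool" where
  "left_module M \<longleftrightarrow>
     mzero M \<in> mcarrier M \<and>
     (\<forall>x\<in>mcarrier M. \<forall>y\<in>mcarrier M. madd M x y \<in> mcarrier M) \<and>
     (\<forall>r. \<forall>x\<in>mcarrier M. msmult M r x \<in> mcarrier M) \<and>
     (\<forall>x\<in>mcarrier M. \<forall>y\<in>mcarrier M. \<forall>z\<in>mcarrier M.
        madd M (madd M x y) z = madd M x (madd M y z)) \<and>
     (\<forall>x\<in>mcarrier M. \<forall>y\<in>mcarrier M. madd M x y = madd M y x) \<and>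
     (\<forall>x\<in>mcarrier M. madd M (mzero M) x = x) \<and>
     (\<forall>x\<in>mcarrier M. \<exists>y\<in>mcarrier M. madd M x y = mzero M) \<and>
     (\<forall>r. \<forall>x\<in>mcarrier M. \<forall>y\<in>mcarrier M.
        msmult M r (madd M x y) = madd M (msmult M r x) (msmult M r y)) \<and>
     (\<forall>r s. \<forall>x\<in>mcarrier M. msmult M (r + s) x = madd M (msmult M r x) (msmult M s x)) \<and>
     (\<forall>r s. \<forall>x\<in>mcarrier M. msmult M (r * s) x = msmult M r (msmult M s x)) \<and>
     (\<forall>x\<in>mcarrier M. msmult M 1 x = x)"

definition submodule :: "('r::ring_1, 'm) lmod \<Rightarrow> 'm set \<Rightarrow> bool" where
  "submodule M N \<longleftrightarrow> N \<subseteq> mcarrier M \<and> mzero M \<in> N \<and>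
     (\<forall>x\<in>N. \<forall>y\<in>N. madd M x y \<in> N) \<and> (\<forall>r. \<forall>x\<in>N. msmult M r x \<in> N)"

definition subm :: "('r, 'm) lmod \<Rightarrow> 'm set \<Rightarrow> ('r, 'm) lmod" where
  "subm M N = M\<lparr>mcarrier := N\<rparr>"

definition mcoset :: "('r, 'm) lmod \<Rightarrow> 'm set \<Rightarrow> 'm \<Rightarrow> 'm set" where
  "mcoset M N x = {madd M x b | b. b \<in> N}"

definition quot :: "('r, 'm) lmod \<Rightarrow> 'm set \<Rightarrow> ('r, 'm set) lmod" where
  "quot M N = \<lparr> mcarrier = mcoset M N ` mcarrier M,
                madd = (\<lambda>X Y. {madd M x y | x y. x \<in> X \<and> y \<in> Y}),
                mzero = N,
                msmult = (\<lambda>r X. {madd M (msmult M r x) b | x b. x \<in> X \<and> b \<in> N}) \<rparr>"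

inductive_set gen :: "('r, 'm) lmod \<Rightarrow> 'm set \<Rightarrow> 'm set" for M S where
  gen_zero: "mzero M \<in> gen M S"
| gen_base: "x \<in> S \<Longrightarrow> x \<in> gen M S"
| gen_add: "x \<in> gen M S \<Longrightarrow> y \<in> gen M S \<Longrightarrow> madd M x y \<in> gen M S"
| gen_smult: "x \<in> gen M S \<Longrightarrow> msmult M r x \<in> gen M S"

definition minimal_gen :: "('r, 'm) lmod \<Rightarrow> 'm set \<Rightarrow> 'm set \<Rightarrow> bool" where
  "minimal_gen M G N \<longleftrightarrow> G \<subseteq> N \<and> gen M G = N \<and> (\<forall>H. H \<subset> G \<longrightarrow> gen M H \<noteq> N)"

definition has_sr :: "('r, 'm) lmod \<Rightarrow> nat \<Rightarrow> bool" where
  "has_sr M r \<longleftrightarrow>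
     (\<forall>S. finite S \<and> S \<subseteq> mcarrier M \<longrightarrow>
        (\<exists>G. finite G \<and> card G \<le> r \<and> G \<subseteq> gen M S \<and> gen M G = gen M S)) \<and>
     (\<exists>S G. finite S \<and> S \<subseteq> mcarrier M \<and> minimal_gen M G (gen M S) \<and>
        finite G \<and> card G = r)"

definition sr :: "('r, 'm) lmod \<Rightarrow> enat" where
  "sr M = (if \<exists>r. has_sr M r then enat (LEAST r. has_sr M r) else \<infinity>)"

end

theory Submission
  imports Defs
begin

definition bnd :: "('r, 'm) lmod \<Rightarrow> nat \<Rightarrow> bool" where
  "bnd M r \<longleftrightarrow> (\<forall>S. finite S \<and> S \<subseteq> mcarrier M \<longrightarrow>
        (\<exists>G. finite G \<and> card G \<le> r \<and> G \<subseteq> gen M S \<and> gen M G = gen M S))"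

lemma has_sr_bnd: "has_sr M r \<Longrightarrow> bnd M r"
  unfolding has_sr_def bnd_def by blast

lemma bnd_least_has_sr:
  assumes "bnd M r" shows "has_sr M (LEAST r. bnd M r)"
proof -
  define d where "d = (LEAST r. bnd M r)"
  have bd: "bnd M d" unfolding d_def using assms by (rule LeastI)
  have ex: "\<exists>S G. finite S \<and> S \<subseteq> mcarrier M \<and> minimal_gen M G (gen M S) \<and>
        finite G \<and> card G = d"
  proof (cases "d = 0")
    case True
    have "minimal_gen M {} (gen M {})" unfolding minimal_gen_def by auto
    then show ?thesis using True by (intro exI[of _ "{}"]) auto
  next
    case False
    have "\<not> bnd M (d - 1)"
    proof
      assume "bnd M (d - 1)"
      then have "d \<le> d - 1" unfolding d_def by (rule Least_le)
      with False show False by simp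
    qed
    then obtain S where S: "finite S" "S \<subseteq> mcarrier M"
      and nS: "\<not> (\<exists>G. finite G \<and> card G \<le> d - 1 \<and> G \<subseteq> gen M S \<and> gen M G = gen M S)"
      unfolding bnd_def by meson
    from bd S obtain G where G: "finite G" "card G \<le> d" "G \<subseteq> gen M S" "gen M G = gen M S"
      unfolding bnd_def by meson
    have cG: "card G = d" proof (rule ccontr)
      assume "card G \<noteq> d"
      then have "card G \<le> d - 1" using G(2) by simp
      then show False using G nS by blast
    qed
    have "minimal_gen M G (gen M S)"
      unfolding minimal_gen_def
    proof (intro conjI allI impI G(3) G(4))
      fix H assume H: "H \<subset> G"
      then have "finite H" "card H < card G" using G(1) by (auto intro: finite_subset psubset_card_mono)
      then have "card H \<le> d - 1" using cG by simp
      moreover have "H \<subseteq> gen M S" using H G(3) by auto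
      ultimately show "gen M H \<noteq> gen M S" using nS \<open>finite H\<close> by blast
    qed
    then show ?thesis using S G(1) cG by blast
  qed
  show ?thesis unfolding has_sr_def d_def[symmetric] using bd ex unfolding bnd_def by blast
qed

lemma sr_eq: "sr M = (if \<exists>r. bnd M r then enat (LEAST r. bnd M r) else \<infinity>)"
proof (cases "\<exists>r. bnd M r")
  case True
  then obtain r where r: "bnd M r" by blast
  have h: "has_sr M (LEAST r. bnd M r)" using bnd_least_has_sr[OF r] .
  have "(LEAST r. has_sr M r) = (LEAST r. bnd M r)"
  proof (rule Least_equality)
    show "has_sr M (LEAST r. bnd M r)" by (rule h)
  next
    fix y assume "has_sr M y"
    then show "(LEAST r. bnd M r) \<le> y" by (intro Least_le has_sr_bnd)
  qed
  then show ?thesis using True h unfolding sr_def by auto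
next
  case False
  then show ?thesis unfolding sr_def using has_sr_bnd by auto
qed

lemma sr_mono:
  assumes "\<And>r. bnd M' r \<Longrightarrow> bnd M r"
  shows "sr M \<le> sr M'"
proof (cases "\<exists>r. bnd M' r")
  case True
  then obtain r where r: "bnd M' r" by blast
  have b: "bnd M (LEAST r. bnd M' r)" using assms LeastI[of "bnd M'", OF r] by blast
  then have le: "(LEAST r. bnd M r) \<le> (LEAST r. bnd M' r)" by (rule Least_le)
  have e1: "sr M = enat (LEAST r. bnd M r)" using b unfolding sr_eq[of M] by auto
  have e2: "sr M' = enat (LEAST r. bnd M' r)" using r unfolding sr_eq[of M'] by auto
  show ?thesis unfolding e1 e2 using le by simp
next
  case False
  then have "sr M' = \<infinity>" unfolding sr_eq[of M'] by auto
  then show ?thesis by simp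
qed

lemma gen_cong_sub:
  assumes "madd M = madd M'" "mzero M = mzero M'" "msmult M = msmult M'"
  shows "gen M S \<subseteq> gen M' S"
proof
  fix x assume "x \<in> gen M S"
  then show "x \<in> gen M' S"
    by induct (auto simp: assms intro: gen.intros)
qed

lemma gen_cong:
  assumes "madd M = madd M'" "mzero M = mzero M'" "msmult M = msmult M'"
  shows "gen M S = gen M' S"
  using gen_cong_sub[OF assms] gen_cong_sub[OF assms[symmetric]] by blast

lemma sr_same_ops:
  assumes "madd M = madd M'" "mzero M = mzero M'" "msmult M = msmult M'"
    and "mcarrier M \<subseteq> mcarrier M'"
  shows "sr M \<le> sr M'"
proof (rule sr_mono)
  fix r assume "bnd M' r"
  show "bnd M r" unfolding bnd_def
  proof (intro allI impI)
    fix S assume "finite S \<and> S \<subseteq> mcarrier M"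
    then have "finite S \<and> S \<subseteq> mcarrier M'" using assms(4) by auto
    then obtain G where "finite G \<and> card G \<le> r \<and> G \<subseteq> gen M' S \<and> gen M' G = gen M' S"
      using \<open>bnd M' r\<close> unfolding bnd_def by meson
    then show "\<exists>G. finite G \<and> card G \<le> r \<and> G \<subseteq> gen M S \<and> gen M G = gen M S"
      using gen_cong[OF assms(1-3)] by metis
  qed
qed


context
  fixes A :: "('r::ring_1, 'm) lmod"
  assumes lm: "left_module A"
begin

lemma lm_zero_in: "mzero A \<in> mcarrier A" using lm unfolding left_module_def by auto
lemma lm_add_in: "x \<in> mcarrier A \<Longrightarrow> y \<in> mcarrier A \<Longrightarrow> madd A x y \<in> mcarrier A"
  using lm unfolding left_module_def by auto
lemma lm_smult_in: "x \<in> mcarrier A \<Longrightarrow> msmult A r x \<in> mcarrier A"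
  using lm unfolding left_module_def by auto
lemma lm_assoc: "x \<in> mcarrier A \<Longrightarrow> y \<in> mcarrier A \<Longrightarrow> z \<in> mcarrier A \<Longrightarrow>
    madd A (madd A x y) z = madd A x (madd A y z)"
  using lm unfolding left_module_def by auto
lemma lm_comm: "x \<in> mcarrier A \<Longrightarrow> y \<in> mcarrier A \<Longrightarrow> madd A x y = madd A y x"
  using lm unfolding left_module_def by auto
lemma lm_lzero: "x \<in> mcarrier A \<Longrightarrow> madd A (mzero A) x = x"
  using lm unfolding left_module_def by auto
lemma lm_rzero: "x \<in> mcarrier A \<Longrightarrow> madd A x (mzero A) = x"
  using lm_lzero lm_comm lm_zero_in by metis
lemma lm_smult_add: "x \<in> mcarrier A \<Longrightarrow> y \<in> mcarrier A \<Longrightarrow>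
    msmult A r (madd A x y) = madd A (msmult A r x) (msmult A r y)"
  using lm unfolding left_module_def by auto

lemma gen_in_carrier: "S \<subseteq> mcarrier A \<Longrightarrow> gen A S \<subseteq> mcarrier A"
proof
  fix x assume "S \<subseteq> mcarrier A" "x \<in> gen A S"
  then show "x \<in> mcarrier A"
    by (induct rule: gen.induct[OF \<open>x \<in> gen A S\<close>]) (auto intro: lm_zero_in lm_add_in lm_smult_in)
qed

context
  fixes B :: "'m set"
  assumes sb: "submodule A B"
begin

lemma sbB: "B \<subseteq> mcarrier A" "mzero A \<in> B" "\<And>x y. x \<in> B \<Longrightarrow> y \<in> B \<Longrightarrow> madd A x y \<in> B"
  "\<And>x r. x \<in> B \<Longrightarrow> msmult A r x \<in> B"
  using sb unfolding submodule_def by blast+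

lemma coset_zero: "mcoset A B (mzero A) = B"
  unfolding mcoset_def using sbB(1) lm_lzero by force

lemma qadd: assumes x: "x \<in> mcarrier A" and y: "y \<in> mcarrier A"
  shows "madd (quot A B) (mcoset A B x) (mcoset A B y) = mcoset A B (madd A x y)"
proof -
  have "madd A (madd A x b) (madd A y b') = madd A (madd A x y) (madd A b b')"
    if b: "b \<in> B" "b' \<in> B" for b b'
  proof -
    have bc: "b \<in> mcarrier A" "b' \<in> mcarrier A" using b sbB(1) by auto
    have "madd A (madd A x b) (madd A y b') = madd A x (madd A b (madd A y b'))"
      using x y bc by (simp add: lm_assoc lm_add_in)
    also have "madd A b (madd A y b') = madd A y (madd A b b')"
      using y bc by (metis lm_assoc lm_comm)
    also have "madd A x (madd A y (madd A b b')) = madd A (madd A x y) (madd A b b')"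
      using x y bc by (simp add: lm_assoc lm_add_in)
    finally show ?thesis .
  qed
  moreover have "madd A (madd A x y) b = madd A (madd A x b) (madd A y (mzero A))"
    if "b \<in> B" for b
  proof -
    have "madd A (madd A x b) (madd A y (mzero A)) = madd A (madd A x y) (madd A b (mzero A))"
      using calculation[OF that sbB(2)] .
    then show ?thesis using that sbB(1) lm_rzero by auto
  qed
  note h1 = calculation and h2 = this
  have L: "madd (quot A B) (mcoset A B x) (mcoset A B y) =
      {madd A u v | u v. u \<in> mcoset A B x \<and> v \<in> mcoset A B y}" by (simp add: quot_def)
  show ?thesis
  proof (rule set_eqI, rule iffI)
    fix z assume "z \<in> madd (quot A B) (mcoset A B x) (mcoset A B y)"
    then obtain u v where uv: "u \<in> mcoset A B x" "v \<in> mcoset A B y" "z = madd A u v"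
      unfolding L by blast
    from uv(1) obtain b where b: "b \<in> B" "u = madd A x b" unfolding mcoset_def by blast
    from uv(2) obtain b' where b': "b' \<in> B" "v = madd A y b'" unfolding mcoset_def by blast
    have bb: "b \<in> B" "b' \<in> B" "z = madd A (madd A x b) (madd A y b')" using b b' uv(3) by auto
    then have "z = madd A (madd A x y) (madd A b b')" using h1 by simp
    moreover have "madd A b b' \<in> B" using bb sbB(3) by blast
    ultimately show "z \<in> mcoset A B (madd A x y)" unfolding mcoset_def by blast
  next
    fix z assume "z \<in> mcoset A B (madd A x y)"
    then obtain b where b: "b \<in> B" "z = madd A (madd A x y) b" unfolding mcoset_def by blast
    then have "z = madd A (madd A x b) (madd A y (mzero A))" using h2 by simp
    moreover have "madd A x b \<in> mcoset A B x" using b unfolding mcoset_def by blast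
    moreover have "madd A y (mzero A) \<in> mcoset A B y" using sbB(2) unfolding mcoset_def by blast
    ultimately show "z \<in> madd (quot A B) (mcoset A B x) (mcoset A B y)" unfolding L by blast
  qed
qed

lemma qsmult: assumes x: "x \<in> mcarrier A"
  shows "msmult (quot A B) r (mcoset A B x) = mcoset A B (msmult A r x)"
proof -
  have "madd A (msmult A r (madd A x b)) b' = madd A (msmult A r x) (madd A (msmult A r b) b')"
    if b: "b \<in> B" "b' \<in> B" for b b'
  proof -
    have bc: "b \<in> mcarrier A" "b' \<in> mcarrier A" using b sbB(1) by auto
    have "msmult A r (madd A x b) = madd A (msmult A r x) (msmult A r b)"
      using x bc(1) by (rule lm_smult_add)
    then show ?thesis using x bc by (simp add: lm_assoc lm_smult_in)
  qed
  moreover have "madd A (msmult A r x) b = madd A (msmult A r (madd A x (mzero A))) b" for b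
    using x lm_rzero by simp
  note h1 = calculation and h2 = this
  have L: "msmult (quot A B) r (mcoset A B x) =
      {madd A (msmult A r u) b | u b. u \<in> mcoset A B x \<and> b \<in> B}" by (simp add: quot_def)
  show ?thesis
  proof (rule set_eqI, rule iffI)
    fix z assume "z \<in> msmult (quot A B) r (mcoset A B x)"
    then obtain u b' where uv: "u \<in> mcoset A B x" "b' \<in> B" "z = madd A (msmult A r u) b'"
      unfolding L by blast
    from uv(1) obtain b where b: "b \<in> B" "u = madd A x b" unfolding mcoset_def by blast
    have bb: "b \<in> B" "b' \<in> B" "z = madd A (msmult A r (madd A x b)) b'" using b uv by auto
    then have "z = madd A (msmult A r x) (madd A (msmult A r b) b')" using h1 by simp
    moreover have "madd A (msmult A r b) b' \<in> B" using bb sbB(3,4) by blast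
    ultimately show "z \<in> mcoset A B (msmult A r x)" unfolding mcoset_def by blast
  next
    fix z assume "z \<in> mcoset A B (msmult A r x)"
    then obtain b where b: "b \<in> B" "z = madd A (msmult A r x) b" unfolding mcoset_def by blast
    then have "z = madd A (msmult A r (madd A x (mzero A))) b" using h2 by simp
    moreover have "madd A x (mzero A) \<in> mcoset A B x" using sbB(2) unfolding mcoset_def by blast
    ultimately show "z \<in> msmult (quot A B) r (mcoset A B x)" unfolding L using b(1) by blast
  qed
qed

lemma gen_quot: assumes T: "T \<subseteq> mcarrier A"
  shows "gen (quot A B) (mcoset A B ` T) = mcoset A B ` gen A T"
proof
  show "mcoset A B ` gen A T \<subseteq> gen (quot A B) (mcoset A B ` T)"
  proof
    fix X assume "X \<in> mcoset A B ` gen A T"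
    then obtain x where x: "x \<in> gen A T" and X: "X = mcoset A B x" by blast
    have "x \<in> mcarrier A \<and> mcoset A B x \<in> gen (quot A B) (mcoset A B ` T)"
      using x
    proof (induct rule: gen.induct)
      case gen_zero
      then show ?case using coset_zero lm_zero_in gen.gen_zero[of "quot A B"] by (simp add: quot_def)
    next
      case (gen_base x)
      then show ?case using T by (auto intro: gen.gen_base)
    next
      case (gen_add x y)
      then show ?case using qadd[of x y] by (metis lm_add_in gen.gen_add)
    next
      case (gen_smult x r)
      then show ?case using qsmult[of x r] by (metis lm_smult_in gen.gen_smult)
    qed
    then show "X \<in> gen (quot A B) (mcoset A B ` T)" using X by simp
  qed
next
  show "gen (quot A B) (mcoset A B ` T) \<subseteq> mcoset A B ` gen A T"
  proof
    fix X assume "X \<in> gen (quot A B) (mcoset A B ` T)"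
    then show "X \<in> mcoset A B ` gen A T"
    proof (induct rule: gen.induct)
      case gen_zero
      have "mzero (quot A B) = mcoset A B (mzero A)" using coset_zero by (simp add: quot_def)
      then show ?case by (auto intro: gen.gen_zero)
    next
      case (gen_base x)
      then show ?case by (auto intro: gen.gen_base)
    next
      case (gen_add X Y)
      then obtain x y where "x \<in> gen A T" "y \<in> gen A T" "X = mcoset A B x" "Y = mcoset A B y"
        by blast
      moreover have "x \<in> mcarrier A" "y \<in> mcarrier A" using calculation gen_in_carrier[OF T] by auto
      ultimately show ?case using qadd[of x y] by (auto intro: gen.gen_add)
    next
      case (gen_smult X r)
      then obtain x where "x \<in> gen A T" "X = mcoset A B x"
        by blast
      moreover have "x \<in> mcarrier A" using calculation gen_in_carrier[OF T] by auto
      ultimately show ?case using qsmult[of x r] by (auto intro: gen.gen_smult)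
    qed
  qed
qed

lemma bnd_quot: assumes "bnd A r" shows "bnd (quot A B) r"
  unfolding bnd_def
proof (intro allI impI)
  fix S assume S: "finite S \<and> S \<subseteq> mcarrier (quot A B)"
  then have "S \<subseteq> mcoset A B ` mcarrier A" by (simp add: quot_def)
  then obtain T where T: "T \<subseteq> mcarrier A" "finite T" "S = mcoset A B ` T"
    using S finite_subset_image by metis
  obtain G where G: "finite G" "card G \<le> r" "G \<subseteq> gen A T" "gen A G = gen A T"
    using assms T unfolding bnd_def by meson
  have Gc: "G \<subseteq> mcarrier A" using G(3) gen_in_carrier[OF T(1)] by auto
  show "\<exists>G. finite G \<and> card G \<le> r \<and> G \<subseteq> gen (quot A B) S \<and> gen (quot A B) G = gen (quot A B) S"
  proof (intro exI conjI)
    show "finite (mcoset A B ` G)" using G(1) by simp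
    show "card (mcoset A B ` G) \<le> r" using G(1,2) card_image_le order_trans by blast
    show "mcoset A B ` G \<subseteq> gen (quot A B) S" using G(3) gen_quot[OF T(1)] T(3) by auto
    show "gen (quot A B) (mcoset A B ` G) = gen (quot A B) S"
      using gen_quot[OF T(1)] gen_quot[OF Gc] G(4) T(3) by simp
  qed
qed

end
end

theorem lemma1:
  fixes A :: "('r::ring_1, 'm) lmod" and B C :: "'m set"
  assumes "left_module A"
    and "sr A \<noteq> \<infinity>"
    and "submodule A B" and "submodule A C" and "B \<subseteq> C"
  shows "sr (subm A B) \<le> sr (subm A C) \<and> sr (subm A C) \<le> sr A
       \<and> sr (quot (subm A C) B) \<le> sr (quot A B) \<and> sr (quot A B) \<le> sr A"
proof (intro conjI)
  show "sr (subm A B) \<le> sr (subm A C)"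
    by (rule sr_same_ops) (use assms in \<open>auto simp: subm_def\<close>)
  show "sr (subm A C) \<le> sr A"
    by (rule sr_same_ops) (use assms in \<open>auto simp: subm_def submodule_def\<close>)
  have mc: "mcoset (subm A C) B = mcoset A B"
    by (auto simp: subm_def mcoset_def fun_eq_iff)
  show "sr (quot (subm A C) B) \<le> sr (quot A B)"
    by (rule sr_same_ops) (use assms in \<open>auto simp: quot_def mc submodule_def, auto simp: subm_def\<close>)
  show "sr (quot A B) \<le> sr A"
    by (rule sr_mono) (rule bnd_quot[OF assms(1) assms(3)])
qed

end
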